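(* Let $M$ be a complete pointed metric space and $Y$ an infinite-dimensional real Banach space. Then there exists a complete pointed metric space $M'$ such that (i) $\mathrm{A}(M',Y)\subsetneqq\mathrm{Lip}_0(M',Y)$; (ii) $M'\setminus M$ is countable; (iii) $M\subseteq M'$ and the metric of $M'$ restricted to $M$ is the metric of $M$.
   Context: Throughout, metric spaces are complete and pointed, with base point $0$. $\mathrm{Lip}_0(M,Y)$ is the Banach space of Lipschitz maps $f:M\to Y$ with $f(0)=0$, normed by $\|f\|=\sup_{p\neq q}\|f(p)-f(q)\|/d(p,q)$. A map $f$ attains its norm toward $y\in Y$ if there is a sequence $(p_n,q_n)$ in $M\times M$ with $p_n\neq q_n$ such that $[f(p_n)-f(q_n)]/d(p_n,q_n)\to y$ and $\|y\|=\|f\|$; $\mathrm{A}(M,Y)$ is the set of $f$ attaining their norm toward some vector. *)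

theory Defs
  imports "HOL-Analysis.Analysis"
begin

definition complete_pointed_mspace :: "'a set \<Rightarrow> ('a \<Rightarrow> 'a \<Rightarrow> real) \<Rightarrow> 'a \<Rightarrow> bool" where
  "complete_pointed_mspace M d z \<longleftrightarrow> Metric_space M d \<and> Metric_space.mcomplete M d \<and> z \<in> M"

text \<open>Lip_0(M,Y): Lipschitz maps on M vanishing at the base point (taken extensional,
  i.e. zero outside M, so that each map on M is represented exactly once).\<close>
definition Lip0 :: "'a set \<Rightarrow> ('a \<Rightarrow> 'a \<Rightarrow> real) \<Rightarrow> 'a \<Rightarrow> ('a \<Rightarrow> 'b::real_normed_vector) set" where
  "Lip0 M d z = {f. (\<forall>x. x \<notin> M \<longrightarrow> f x = 0) \<and> f z = 0 \<and>
      (\<exists>L. \<forall>p\<in>M. \<forall>q\<in>M. norm (f p - f q) \<le> L * d p q)}"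

definition lip_norm :: "'a set \<Rightarrow> ('a \<Rightarrow> 'a \<Rightarrow> real) \<Rightarrow> ('a \<Rightarrow> 'b::real_normed_vector) \<Rightarrow> real" where
  "lip_norm M d f = Sup ({0} \<union> {norm (f p - f q) / d p q | p q. p \<in> M \<and> q \<in> M \<and> p \<noteq> q})"

definition attains_norm_toward :: "'a set \<Rightarrow> ('a \<Rightarrow> 'a \<Rightarrow> real) \<Rightarrow> ('a \<Rightarrow> 'b::real_normed_vector) \<Rightarrow> 'b \<Rightarrow> bool" where
  "attains_norm_toward M d f y \<longleftrightarrow>
     (\<exists>p q. (\<forall>n. p n \<in> M \<and> q n \<in> M \<and> p n \<noteq> q n) \<and>
       ((\<lambda>n. (1 / d (p n) (q n)) *\<^sub>R (f (p n) - f (q n))) \<longlonglongrightarrow> y) \<and>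
       norm y = lip_norm M d f)"

definition NA :: "'a set \<Rightarrow> ('a \<Rightarrow> 'a \<Rightarrow> real) \<Rightarrow> 'a \<Rightarrow> ('a \<Rightarrow> 'b::real_normed_vector) set" where
  "NA M d z = {f \<in> Lip0 M d z. \<exists>y. attains_norm_toward M d f y}"

end

theory Submission
  imports Defs
begin


lemma span_insert_closed:
  fixes a :: "'b::real_normed_vector"
  assumes cl: "closed (span S)" and a: "a \<notin> span S"
  shows "closed (span (insert a S))"
proof -
  define V where "V = span S"
  define \<delta> where "\<delta> = infdist a V"
  have V0: "0 \<in> V" unfolding V_def by (simp add: span_zero)
  have dpos: "\<delta> > 0" unfolding \<delta>_def
    using infdist_pos_not_in_closed[of V a] cl a V0 V_def by auto
  have bound: "\<bar>t\<bar> * \<delta> \<le> norm (v + t *\<^sub>R a)" if "v \<in> V" for v t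
  proof (cases "t = 0")
    case True then show ?thesis by simp
  next
    case False
    have "- ((1/t) *\<^sub>R v) \<in> V" using that unfolding V_def by (simp add: span_neg span_scale)
    then have "\<delta> \<le> dist a (- ((1/t) *\<^sub>R v))" unfolding \<delta>_def by (rule infdist_le)
    also have "\<dots> = norm (a + (1/t) *\<^sub>R v)" by (simp add: dist_norm)
    finally have "\<bar>t\<bar> * \<delta> \<le> \<bar>t\<bar> * norm (a + (1/t) *\<^sub>R v)"
      by (simp add: mult_left_mono)
    also have "\<dots> = norm (t *\<^sub>R (a + (1/t) *\<^sub>R v))" by simp
    also have "t *\<^sub>R (a + (1/t) *\<^sub>R v) = v + t *\<^sub>R a" using False
      by (simp add: algebra_simps)
    finally show ?thesis .
  qed
  show ?thesis
    unfolding closed_sequential_limits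
  proof (intro allI impI)
    fix y l assume H: "(\<forall>n. y n \<in> span (insert a S)) \<and> y \<longlonglongrightarrow> l"
    then have "\<forall>n. \<exists>k. y n - k *\<^sub>R a \<in> V" unfolding V_def span_insert by auto
    then obtain t where t: "\<And>n. y n - t n *\<^sub>R a \<in> V" by metis
    have cy: "Cauchy y" using H LIMSEQ_imp_Cauchy by blast
    have "Cauchy t"
    proof (rule metric_CauchyI)
      fix e :: real assume "e > 0"
      then have "e * \<delta> > 0" using dpos by simp
      then obtain N where N: "\<And>m n. m \<ge> N \<Longrightarrow> n \<ge> N \<Longrightarrow> dist (y m) (y n) < e * \<delta>"
        using metric_CauchyD[OF cy] by blast
      show "\<exists>M. \<forall>m\<ge>M. \<forall>n\<ge>M. dist (t m) (t n) < e"
      proof (intro exI allI impI)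
        fix m n assume mn: "m \<ge> N" "n \<ge> N"
        have "(y m - t m *\<^sub>R a) - (y n - t n *\<^sub>R a) \<in> V"
          using t unfolding V_def by (simp add: span_diff)
        from bound[OF this, of "t m - t n"]
        have "\<bar>t m - t n\<bar> * \<delta> \<le> norm (y m - y n)" by (simp add: algebra_simps)
        also have "\<dots> < e * \<delta>" using N[OF mn] by (simp add: dist_norm)
        finally show "dist (t m) (t n) < e" using dpos by (simp add: dist_real_def)
      qed
    qed
    then obtain T where T: "t \<longlonglongrightarrow> T" using Cauchy_convergent_iff convergent_def by blast
    have "(\<lambda>n. y n - t n *\<^sub>R a) \<longlonglongrightarrow> l - T *\<^sub>R a"
      using H T by (intro tendsto_intros) auto
    moreover have "\<forall>n. y n - t n *\<^sub>R a \<in> V" using t by blast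
    ultimately show "l \<in> span (insert a S)"
      using cl[unfolded closed_sequential_limits, rule_format, of "\<lambda>n. y n - t n *\<^sub>R a" "l - T *\<^sub>R a"]
      unfolding span_insert V_def by auto
  qed
qed

lemma closed_span_finite:
  fixes S :: "'b::real_normed_vector set"
  assumes "finite S" shows "closed (span S)"
  using assms
proof (induction S rule: finite_induct)
  case empty then show ?case by simp
next
  case (insert a S)
  show ?case
  proof (cases "a \<in> span S")
    case True then show ?thesis using insert by (simp add: span_redundant)
  next
    case False then show ?thesis by (intro span_insert_closed) (use insert.IH in auto)
  qed
qed

lemma riesz_half:
  fixes S :: "'b::real_normed_vector set"
  assumes "finite S" "span S \<noteq> UNIV"
  shows "\<exists>w. norm w = 1 \<and> (\<forall>v\<in>span S. 1/2 \<le> norm (w - v))"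
proof -
  define V where "V = span S"
  obtain x where x: "x \<notin> V" using assms unfolding V_def by auto
  have V0: "0 \<in> V" unfolding V_def by (simp add: span_zero)
  define \<delta> where "\<delta> = infdist x V"
  have dpos: "\<delta> > 0" unfolding \<delta>_def
    using infdist_pos_not_in_closed[of V x] closed_span_finite[OF assms(1)] x V0 V_def by auto
  have "infdist x V = (INF a\<in>V. dist x a)" using V0 by (intro infdist_notempty) blast
  then have "(INF a\<in>V. dist x a) < 2 * \<delta>" using dpos \<delta>_def by linarith
  then obtain v0 where v0: "v0 \<in> V" "dist x v0 < 2 * \<delta>"
  proof -
    have bdd: "bdd_below (dist x ` V)" by (rule bdd_belowI[where m=0]) auto
    have "V \<noteq> {}" using V0 by blast
    then show ?thesis using that cINF_less_iff[OF _ bdd] \<open>(INF a\<in>V. dist x a) < 2 * \<delta>\<close> by blast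
  qed
  define r where "r = norm (x - v0)"
  have "x \<noteq> v0" using x v0 by auto
  then have rpos: "r > 0" unfolding r_def by simp
  have r2: "r < 2 * \<delta>" using v0 unfolding r_def by (simp add: dist_norm)
  show ?thesis
  proof (intro exI conjI ballI)
    show "norm ((1/r) *\<^sub>R (x - v0)) = 1" using rpos unfolding r_def by simp
    fix v assume v: "v \<in> span S"
    have "v0 + r *\<^sub>R v \<in> V" using v v0 unfolding V_def by (simp add: span_add span_scale)
    then have "\<delta> \<le> dist x (v0 + r *\<^sub>R v)" unfolding \<delta>_def by (rule infdist_le)
    also have "\<dots> = norm (r *\<^sub>R ((1/r) *\<^sub>R (x - v0) - v))" using rpos
      by (simp add: dist_norm algebra_simps)
    also have "\<dots> = r * norm ((1/r) *\<^sub>R (x - v0) - v)" using rpos by simp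
    finally have "\<delta> \<le> r * norm ((1/r) *\<^sub>R (x - v0) - v)" .
    show "1/2 \<le> norm ((1/r) *\<^sub>R (x - v0) - v)"
    proof (rule ccontr)
      assume "\<not> ?thesis"
      then have "r * norm ((1/r) *\<^sub>R (x - v0) - v) < r * (1/2)"
        using rpos by (intro mult_strict_left_mono) auto
      with \<open>\<delta> \<le> r * _\<close> r2 show False by linarith
    qed
  qed
qed



abbreviation ext_set :: "'a set \<Rightarrow> ('a + nat) set" where
  "ext_set M \<equiv> Inl ` M \<union> range Inr"

fun dd :: "('a \<Rightarrow> 'a \<Rightarrow> real) \<Rightarrow> 'a \<Rightarrow> 'a + nat \<Rightarrow> 'a + nat \<Rightarrow> real" where
  "dd d z (Inl a) (Inl b) = d a b"
| "dd d z (Inl a) (Inr n) = d a z + 1"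
| "dd d z (Inr n) (Inl a) = d a z + 1"
| "dd d z (Inr n) (Inr m) = (if n = m then 0 else 2)"

lemma dd_metric:
  assumes "Metric_space M d" "z \<in> M"
  shows "Metric_space (ext_set M) (dd d z)"
proof -
  interpret Metric_space M d by fact
  show ?thesis
  proof
    fix x y show "0 \<le> dd d z x y" by (cases x; cases y) auto
  next
    fix x y show "dd d z x y = dd d z y x" by (cases x; cases y) (auto simp: commute)
  next
    fix x y assume "x \<in> ext_set M" "y \<in> ext_set M"
    then show "(dd d z x y = 0) = (x = y)"
      by (cases x; cases y) (auto, (smt (verit) nonneg)+)
  next
    fix x y u assume H: "x \<in> ext_set M" "y \<in> ext_set M" "u \<in> ext_set M"
    show "dd d z x u \<le> dd d z x y + dd d z y u"
    proof (cases x)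
      case (Inl a)
      then have a: "a \<in> M" using H by auto
      show ?thesis
      proof (cases y)
        case (Inl b)
        then have b: "b \<in> M" using H by auto
        show ?thesis
        proof (cases u)
          case (Inl c)
          then have "c \<in> M" using H by auto
          then show ?thesis using \<open>x = Inl a\<close> \<open>y = Inl b\<close> Inl a b triangle by auto
        next
          case (Inr n)
          then show ?thesis using \<open>x = Inl a\<close> \<open>y = Inl b\<close> a b triangle[of a b z] assms(2) by auto
        qed
      next
        case (Inr m)
        show ?thesis
        proof (cases u)
          case (Inl c)
          then have "c \<in> M" using H by auto
          then show ?thesis using \<open>x = Inl a\<close> \<open>y = Inr m\<close> Inl a triangle[of a z c] assms(2) commute[of z c]
            by auto
        next
          case (Inr n)
          then show ?thesis using \<open>x = Inl a\<close> \<open>y = Inr m\<close> nonneg[of a z] by auto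
        qed
      qed
    next
      case (Inr k)
      show ?thesis
      proof (cases y)
        case (Inl b)
        then have b: "b \<in> M" using H by auto
        show ?thesis
        proof (cases u)
          case (Inl c)
          then have "c \<in> M" using H by auto
          then show ?thesis using \<open>x = Inr k\<close> \<open>y = Inl b\<close> Inl b triangle[of c b z] assms(2) commute[of c b]
            by auto
        next
          case (Inr n)
          then show ?thesis using \<open>x = Inr k\<close> \<open>y = Inl b\<close> nonneg[of b z] by auto
        qed
      next
        case (Inr m)
        show ?thesis
        proof (cases u)
          case (Inl c)
          then show ?thesis using \<open>x = Inr k\<close> \<open>y = Inr m\<close> nonneg[of c z] by auto
        next
          case (Inr n)
          then show ?thesis using \<open>x = Inr k\<close> \<open>y = Inr m\<close> by auto
        qed
      qed
    qed
  qed
qed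

lemma dd_complete:
  assumes "Metric_space M d" "z \<in> M" "Metric_space.mcomplete M d"
  shows "Metric_space.mcomplete (ext_set M) (dd d z)"
proof -
  interpret M: Metric_space M d by fact
  interpret M': Metric_space "ext_set M" "dd d z" by (rule dd_metric[OF assms(1,2)])
  show ?thesis unfolding M'.mcomplete_def
  proof (intro allI impI)
    fix \<sigma> assume C: "M'.MCauchy \<sigma>"
    then have rng: "\<And>n. \<sigma> n \<in> ext_set M" unfolding M'.MCauchy_def by auto
    obtain N where N: "\<And>n n'. N \<le> n \<Longrightarrow> N \<le> n' \<Longrightarrow> dd d z (\<sigma> n) (\<sigma> n') < 1"
      using C unfolding M'.MCauchy_def by (meson zero_less_one)
    show "\<exists>x. limitin M'.mtopology \<sigma> x sequentially"
    proof (cases "\<sigma> N")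
      case (Inl a)
      have isl: "\<exists>b. \<sigma> n = Inl b" if "n \<ge> N" for n
      proof (cases "\<sigma> n")
        case (Inr k)
        then have "dd d z (\<sigma> N) (\<sigma> n) = d a z + 1" using Inl by simp
        then show ?thesis using N[OF order_refl that] M.nonneg[of a z] by simp
      qed auto
      define b where "b n = case_sum id (\<lambda>_. z) (\<sigma> n)" for n
      have bM: "b n \<in> M" for n using rng[of n] assms(2) unfolding b_def by (auto split: sum.splits)
      have bs: "\<sigma> n = Inl (b n)" if "n \<ge> N" for n using isl[OF that] unfolding b_def by auto
      have "M.MCauchy b"
        unfolding M.MCauchy_def
      proof (intro conjI allI impI)
        show "range b \<subseteq> M" using bM by auto
        fix e :: real assume "e > 0"
        then obtain N' where N': "\<And>n n'. N' \<le> n \<Longrightarrow> N' \<le> n' \<Longrightarrow> dd d z (\<sigma> n) (\<sigma> n') < e"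
          using C unfolding M'.MCauchy_def by meson
        show "\<exists>N. \<forall>n n'. N \<le> n \<longrightarrow> N \<le> n' \<longrightarrow> d (b n) (b n') < e"
        proof (intro exI allI impI)
          fix n n' assume "max N N' \<le> n" "max N N' \<le> n'"
          then show "d (b n) (b n') < e" using N'[of n n'] bs[of n] bs[of n'] by auto
        qed
      qed
      then obtain x where "limitin M.mtopology b x sequentially"
        using assms(3) unfolding M.mcomplete_def by blast
      then have x: "x \<in> M" "\<And>e. e > 0 \<Longrightarrow> eventually (\<lambda>n. b n \<in> M \<and> d (b n) x < e) sequentially"
        unfolding M.limitin_metric by auto
      have "limitin M'.mtopology \<sigma> (Inl x) sequentially"
        unfolding M'.limitin_metric
      proof (intro conjI allI impI)
        show "Inl x \<in> ext_set M" using x by auto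
        fix e :: real assume "e > 0"
        have "eventually (\<lambda>n. n \<ge> N) sequentially" by (simp add: eventually_ge_at_top)
        with x(2)[OF \<open>e > 0\<close>]
        show "eventually (\<lambda>n. \<sigma> n \<in> ext_set M \<and> dd d z (\<sigma> n) (Inl x) < e) sequentially"
          by eventually_elim (use rng bs in auto)
      qed
      then show ?thesis by blast
    next
      case (Inr k)
      have isr: "\<sigma> n = Inr k" if "n \<ge> N" for n
      proof (cases "\<sigma> n")
        case (Inl a)
        then have "dd d z (\<sigma> N) (\<sigma> n) = d a z + 1" using Inr by simp
        then show ?thesis using N[OF order_refl that] M.nonneg[of a z] by simp
      next
        case (Inr m)
        then show ?thesis using N[OF order_refl that] \<open>\<sigma> N = Inr k\<close> by (auto split: if_splits)
      qed
      have "limitin M'.mtopology \<sigma> (Inr k) sequentially"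
        unfolding M'.limitin_metric
      proof (intro conjI allI impI)
        show "Inr k \<in> ext_set M" by auto
        fix e :: real assume "e > 0"
        have "eventually (\<lambda>n. n \<ge> N) sequentially" by (simp add: eventually_ge_at_top)
        then show "eventually (\<lambda>n. \<sigma> n \<in> ext_set M \<and> dd d z (\<sigma> n) (Inr k) < e) sequentially"
          by eventually_elim (use rng isr \<open>e > 0\<close> in auto)
      qed
      then show ?thesis by blast
    qed
  qed
qed



definition rz :: "'b::real_normed_vector set \<Rightarrow> 'b" where
  "rz S = (SOME w. norm w = 1 \<and> (\<forall>v\<in>span S. 1/2 \<le> norm (w - v)))"

primrec wl :: "nat \<Rightarrow> 'b::real_normed_vector list" where
  "wl 0 = []"
| "wl (Suc n) = wl n @ [rz (set (wl n))]"

definition ws :: "nat \<Rightarrow> 'b::real_normed_vector" where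
  "ws n = rz (set (wl n))"

lemma set_wl: "set (wl n) = ws ` {..<n}"
  by (induction n) (auto simp: ws_def lessThan_Suc)

lemma ws_prop:
  assumes "\<And>S :: 'b::real_normed_vector set. finite S \<Longrightarrow> span S \<noteq> UNIV"
  shows "norm (ws n :: 'b) = 1 \<and> (\<forall>v\<in>span (ws ` {..<n}). 1/2 \<le> norm (ws n - v :: 'b))"
proof -
  have "\<exists>w::'b. norm w = 1 \<and> (\<forall>v\<in>span (set (wl n)). 1/2 \<le> norm (w - v))"
    using riesz_half[of "set (wl n)"] assms by blast
  from someI_ex[OF this]
  have "norm (rz (set (wl n)) :: 'b) = 1 \<and> (\<forall>v\<in>span (set (wl n)). 1/2 \<le> norm (rz (set (wl n)) - v :: 'b))"
    by (simp add: rz_def)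
  then have "norm (ws n :: 'b) = 1 \<and> (\<forall>v\<in>span (set (wl n)). 1/2 \<le> norm (ws n - v :: 'b))"
    unfolding ws_def[symmetric] .
  then show ?thesis unfolding set_wl .
qed

definition rr :: "nat \<Rightarrow> real" where "rr n = 1 - 1 / (real n + 2)"

lemma rr_bounds: "1/2 \<le> rr n" "rr n < 1"
proof -
  have "1 / (real n + 2) \<le> 1 / 2" by (intro divide_left_mono) auto
  then show "1/2 \<le> rr n" unfolding rr_def by simp
  have "0 < 1 / (real n + 2)" by simp
  then show "rr n < 1" unfolding rr_def by simp
qed

lemma rr_mono: "m \<le> n \<Longrightarrow> rr m \<le> rr n"
proof -
  assume "m \<le> n"
  then have "1 / (real n + 2) \<le> 1 / (real m + 2)" by (intro divide_left_mono) auto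
  then show ?thesis unfolding rr_def by simp
qed

lemma rr_less: "rr m < rr n \<Longrightarrow> m < n"
proof (rule ccontr)
  assume "rr m < rr n" "\<not> m < n"
  then have "rr n \<le> rr m" by (intro rr_mono) simp
  with \<open>rr m < rr n\<close> show False by simp
qed

definition ff :: "(nat \<Rightarrow> 'b::real_normed_vector) \<Rightarrow> 'a + nat \<Rightarrow> 'b" where
  "ff w = case_sum (\<lambda>_. 0) (\<lambda>n. rr n *\<^sub>R w n)"

lemma norm_comb:
  fixes w :: "'b::real_normed_vector"
  assumes "\<forall>v\<in>V. 1/2 \<le> norm (w - v)" "subspace V" "u \<in> V"
  shows "\<bar>c\<bar> / 2 \<le> norm (c *\<^sub>R w + u)"
proof (cases "c = 0")
  case True then show ?thesis by simp
next
  case False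
  have "- ((1/c) *\<^sub>R u) \<in> V" using assms(2,3) by (simp add: subspace_neg subspace_scale)
  then have "1/2 \<le> norm (w - - ((1/c) *\<^sub>R u))" using assms(1) by blast
  then have "\<bar>c\<bar> * (1/2) \<le> \<bar>c\<bar> * norm (w + (1/c) *\<^sub>R u)" by (intro mult_left_mono) auto
  also have "\<dots> = norm (c *\<^sub>R (w + (1/c) *\<^sub>R u))" by simp
  also have "c *\<^sub>R (w + (1/c) *\<^sub>R u) = c *\<^sub>R w + u" using False by (simp add: algebra_simps)
  finally show ?thesis by simp
qed



context
  fixes M :: "'a set" and d :: "'a \<Rightarrow> 'a \<Rightarrow> real" and z :: 'a and w :: "nat \<Rightarrow> 'b::real_normed_vector"
  assumes ms: "Metric_space M d" and zM: "z \<in> M"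
    and wn: "\<And>n. norm (w n) = 1"
    and wsep: "\<And>n v. v \<in> span (w ` {..<n}) \<Longrightarrow> 1/2 \<le> norm (w n - v)"
begin

lemma ff_lip: "p \<in> ext_set M \<Longrightarrow> q \<in> ext_set M \<Longrightarrow> norm (ff w p - ff w q) \<le> dd d z p q"
proof -
  have nonneg: "\<And>x y. 0 \<le> d x y" using Metric_space.nonneg[OF ms] by blast
  assume p: "p \<in> ext_set M" and q: "q \<in> ext_set M"
  show ?thesis
  proof (cases p)
    case (Inl a)
    then show ?thesis
    proof (cases q)
      case (Inr n)
      then show ?thesis using Inl wn[of n] rr_bounds[of n] nonneg[of a z] by (simp add: ff_def)
    qed (simp add: ff_def nonneg)
  next
    case (Inr k)
    then show ?thesis
    proof (cases q)
      case (Inl a)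
      then show ?thesis using Inr wn[of k] rr_bounds[of k] nonneg[of a z] by (simp add: ff_def)
    next
      case (Inr n)
      have "norm (rr k *\<^sub>R w k - rr n *\<^sub>R w n) \<le> norm (rr k *\<^sub>R w k) + norm (rr n *\<^sub>R w n)"
        by (rule norm_triangle_ineq4)
      also have "\<dots> \<le> 2" using wn[of n] wn[of k] rr_bounds[of n] rr_bounds[of k] by simp
      finally show ?thesis using \<open>p = Inr k\<close> Inr by (simp add: ff_def)
    qed
  qed
qed

lemma dd_pos: "p \<in> ext_set M \<Longrightarrow> q \<in> ext_set M \<Longrightarrow> p \<noteq> q \<Longrightarrow> dd d z p q > 0"
proof -
  interpret M': Metric_space "ext_set M" "dd d z" by (rule dd_metric[OF ms zM])
  show "p \<in> ext_set M \<Longrightarrow> q \<in> ext_set M \<Longrightarrow> p \<noteq> q \<Longrightarrow> dd d z p q > 0"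
    using M'.nonneg M'.zero by (metis order_le_less)
qed

lemma ff_Lip0: "ff w \<in> Lip0 (ext_set M) (dd d z) (Inl z)"
  unfolding Lip0_def
proof (intro CollectI conjI allI impI)
  fix x assume "x \<notin> ext_set M"
  then show "ff w x = 0" by (cases x) (auto simp: ff_def)
next
  show "ff w (Inl z) = 0" by (simp add: ff_def)
  show "\<exists>L. \<forall>p\<in>ext_set M. \<forall>q\<in>ext_set M. norm (ff w p - ff w q) \<le> L * dd d z p q"
    by (rule exI[of _ 1]) (simp add: ff_lip)
qed

lemma ff_norm: "lip_norm (ext_set M) (dd d z) (ff w) = 1"
  unfolding lip_norm_def
proof (rule cSup_eq_non_empty)
  show "{0} \<union> {norm (ff w p - ff w q) / dd d z p q |p q. p \<in> ext_set M \<and> q \<in> ext_set M \<and> p \<noteq> q} \<noteq> {}"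
    by blast
next
  fix x assume "x \<in> {0} \<union> {norm (ff w p - ff w q) / dd d z p q |p q. p \<in> ext_set M \<and> q \<in> ext_set M \<and> p \<noteq> q}"
  then show "x \<le> 1"
  proof
    assume "x \<in> {0}" then show ?thesis by simp
  next
    assume "x \<in> {norm (ff w p - ff w q) / dd d z p q |p q. p \<in> ext_set M \<and> q \<in> ext_set M \<and> p \<noteq> q}"
    then obtain p q where pq: "p \<in> ext_set M" "q \<in> ext_set M" "p \<noteq> q" "x = norm (ff w p - ff w q) / dd d z p q"
      by blast
    then show ?thesis using ff_lip[OF pq(1,2)] dd_pos[OF pq(1-3)] by (simp add: divide_le_eq)
  qed
next
  fix y assume ub: "\<And>x. x \<in> {0} \<union> {norm (ff w p - ff w q) / dd d z p q |p q. p \<in> ext_set M \<and> q \<in> ext_set M \<and> p \<noteq> q} \<Longrightarrow> x \<le> y"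
  have rn: "rr n \<le> y" for n
  proof -
    have eq: "rr n = norm (ff w (Inr n) - ff w (Inl z)) / dd d z (Inr n) (Inl z)"
      using wn[of n] rr_bounds[of n] Metric_space.zero[OF ms zM zM] by (simp add: ff_def)
    have "rr n \<in> {0} \<union> {norm (ff w p - ff w q) / dd d z p q |p q. p \<in> ext_set M \<and> q \<in> ext_set M \<and> p \<noteq> q}"
      apply (rule UnI2)
      apply (rule CollectI)
      apply (rule exI[of _ "Inr n"], rule exI[of _ "Inl z"])
      using eq zM by auto
    then show ?thesis by (rule ub)
  qed
  show "1 \<le> y"
  proof (rule ccontr)
    assume "\<not> 1 \<le> y"
    then have "1 - y > 0" by simp
    then obtain n where n: "1 / (1 - y) < real n" using reals_Archimedean2 by blast
    then have "1 < real n * (1 - y)" using \<open>1 - y > 0\<close> by (simp add: divide_less_eq)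
    then have "1 < (real n + 2) * (1 - y)" using \<open>1 - y > 0\<close> by (smt (verit) mult_right_mono)
    then have "1 / (real n + 2) < 1 - y" by (simp add: divide_less_eq mult.commute)
    then show False using rn[of n] unfolding rr_def by simp
  qed
qed

lemma quot_struct:
  assumes p: "p \<in> ext_set M" and q: "q \<in> ext_set M" and pq: "p \<noteq> q"
    and big: "1/2 \<le> norm ((1 / dd d z p q) *\<^sub>R (ff w p - ff w q))"
  shows "\<exists>N c v. (1 / dd d z p q) *\<^sub>R (ff w p - ff w q) = c *\<^sub>R w N + v \<and> v \<in> span (w ` {..<N})
           \<and> norm ((1 / dd d z p q) *\<^sub>R (ff w p - ff w q)) \<le> rr N \<and> 1/4 \<le> \<bar>c\<bar>"
proof -
  have nonneg: "\<And>x y. 0 \<le> d x y" using Metric_space.nonneg[OF ms] by blast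
  show ?thesis
  proof (cases p)
    case (Inl a)
    show ?thesis
    proof (cases q)
      case (Inl b)
      then show ?thesis using big \<open>p = Inl a\<close> by (simp add: ff_def)
    next
      case (Inr n)
      define t where "t = 1 / (d a z + 1)"
      have t: "0 < t" "t \<le> 1" unfolding t_def using nonneg[of a z] by auto
      have Q: "(1 / dd d z p q) *\<^sub>R (ff w p - ff w q) = (- (t * rr n)) *\<^sub>R w n + 0"
        using Inl Inr by (simp add: ff_def t_def)
      have nQ: "norm ((1 / dd d z p q) *\<^sub>R (ff w p - ff w q)) = t * rr n"
        unfolding Q using wn[of n] t rr_bounds[of n] by simp
      show ?thesis
      proof (intro exI conjI)
        show "(1 / dd d z p q) *\<^sub>R (ff w p - ff w q) = (- (t * rr n)) *\<^sub>R w n + 0" by (rule Q)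
        show "0 \<in> span (w ` {..<n})" by (rule span_zero)
        show "norm ((1 / dd d z p q) *\<^sub>R (ff w p - ff w q)) \<le> rr n" unfolding nQ
          using t rr_bounds[of n] by (simp add: mult_left_le_one_le)
        show "1/4 \<le> \<bar>- (t * rr n)\<bar>" using big nQ t rr_bounds[of n] by simp
      qed
    qed
  next
    case (Inr k)
    show ?thesis
    proof (cases q)
      case (Inl a)
      define t where "t = 1 / (d a z + 1)"
      have t: "0 < t" "t \<le> 1" unfolding t_def using nonneg[of a z] by auto
      have Q: "(1 / dd d z p q) *\<^sub>R (ff w p - ff w q) = (t * rr k) *\<^sub>R w k + 0"
        using Inl Inr by (simp add: ff_def t_def)
      have nQ: "norm ((1 / dd d z p q) *\<^sub>R (ff w p - ff w q)) = t * rr k"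
        unfolding Q using wn[of k] t rr_bounds[of k] by simp
      show ?thesis
      proof (intro exI conjI)
        show "(1 / dd d z p q) *\<^sub>R (ff w p - ff w q) = (t * rr k) *\<^sub>R w k + 0" by (rule Q)
        show "0 \<in> span (w ` {..<k})" by (rule span_zero)
        show "norm ((1 / dd d z p q) *\<^sub>R (ff w p - ff w q)) \<le> rr k" unfolding nQ
          using t rr_bounds[of k] by (simp add: mult_left_le_one_le)
        show "1/4 \<le> \<bar>t * rr k\<bar>" using big nQ t rr_bounds[of k] by simp
      qed
    next
      case (Inr n)
      with \<open>p = Inr k\<close> pq have kn: "k \<noteq> n" by auto
      have Q: "(1 / dd d z p q) *\<^sub>R (ff w p - ff w q) = (rr k / 2) *\<^sub>R w k - (rr n / 2) *\<^sub>R w n"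
        using Inr \<open>p = Inr k\<close> kn by (simp add: ff_def scaleR_diff_right)
      have nQ: "norm ((1 / dd d z p q) *\<^sub>R (ff w p - ff w q)) \<le> rr k / 2 + rr n / 2"
        unfolding Q using norm_triangle_ineq4[of "(rr k / 2) *\<^sub>R w k" "(rr n / 2) *\<^sub>R w n"]
          wn[of k] wn[of n] rr_bounds[of k] rr_bounds[of n] by simp
      show ?thesis
      proof (cases "k < n")
        case True
        show ?thesis
        proof (intro exI conjI)
          show "(1 / dd d z p q) *\<^sub>R (ff w p - ff w q) = (- (rr n / 2)) *\<^sub>R w n + (rr k / 2) *\<^sub>R w k"
            unfolding Q by simp
          show "(rr k / 2) *\<^sub>R w k \<in> span (w ` {..<n})" using True by (intro span_scale span_base) auto
          show "norm ((1 / dd d z p q) *\<^sub>R (ff w p - ff w q)) \<le> rr n"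
            using nQ rr_mono[of k n] True by simp
          show "1/4 \<le> \<bar>- (rr n / 2)\<bar>" using rr_bounds[of n] by simp
        qed
      next
        case False
        then have nk: "n < k" using kn by simp
        show ?thesis
        proof (intro exI conjI)
          show "(1 / dd d z p q) *\<^sub>R (ff w p - ff w q) = (rr k / 2) *\<^sub>R w k + (- (rr n / 2)) *\<^sub>R w n"
            unfolding Q by simp
          show "(- (rr n / 2)) *\<^sub>R w n \<in> span (w ` {..<k})" using nk by (intro span_scale span_base) auto
          show "norm ((1 / dd d z p q) *\<^sub>R (ff w p - ff w q)) \<le> rr k"
            using nQ rr_mono[of n k] nk by simp
          show "1/4 \<le> \<bar>rr k / 2\<bar>" using rr_bounds[of k] by simp
        qed
      qed
    qed
  qed
qed

lemma ff_not_NA: "ff w \<notin> NA (ext_set M) (dd d z) (Inl z)"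
proof
  assume "ff w \<in> NA (ext_set M) (dd d z) (Inl z)"
  then obtain y where A: "attains_norm_toward (ext_set M) (dd d z) (ff w) y"
    unfolding NA_def by blast
  then obtain p q where pq0: "\<forall>n. p n \<in> ext_set M \<and> q n \<in> ext_set M \<and> p n \<noteq> q n"
    and lim: "(\<lambda>n. (1 / dd d z (p n) (q n)) *\<^sub>R (ff w (p n) - ff w (q n))) \<longlonglongrightarrow> y"
    and ny0: "norm y = lip_norm (ext_set M) (dd d z) (ff w)"
    unfolding attains_norm_toward_def by blast
  have pq: "p n \<in> ext_set M \<and> q n \<in> ext_set M \<and> p n \<noteq> q n" for n using pq0 by blast
  have ny: "norm y = 1" using ny0 ff_norm by simp
  define Q where "Q n = (1 / dd d z (p n) (q n)) *\<^sub>R (ff w (p n) - ff w (q n))" for n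
  have limQ: "Q \<longlonglongrightarrow> y" using lim unfolding Q_def .
  have nlim: "(\<lambda>n. norm (Q n)) \<longlonglongrightarrow> 1" using tendsto_norm[OF limQ] ny by simp
  have ev: "\<exists>K. \<forall>n\<ge>K. a < norm (Q n)" if "a < 1" for a
  proof -
    have "eventually (\<lambda>n. a < norm (Q n)) sequentially"
      using order_tendstoD(1)[OF nlim that] .
    then show ?thesis unfolding eventually_sequentially by blast
  qed
  obtain K1 where K1: "\<And>j k. j \<ge> K1 \<Longrightarrow> k \<ge> K1 \<Longrightarrow> dist (Q j) (Q k) < 1/8"
    using metric_CauchyD[OF LIMSEQ_imp_Cauchy[OF limQ], of "1/8"] by auto
  obtain K2 where K2: "\<And>n. n \<ge> K2 \<Longrightarrow> 1/2 < norm (Q n)" using ev[of "1/2"] by auto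
  define K where "K = max K1 K2"
  have sK: "\<exists>N c v. Q n = c *\<^sub>R w N + v \<and> v \<in> span (w ` {..<N}) \<and> norm (Q n) \<le> rr N \<and> 1/4 \<le> \<bar>c\<bar>"
    if "n \<ge> K" for n
    using quot_struct[of "p n" "q n"] pq[of n] K2[of n] that unfolding Q_def K_def by auto
  obtain N0 c0 v0 where s0: "Q K = c0 *\<^sub>R w N0 + v0" "v0 \<in> span (w ` {..<N0})" "norm (Q K) \<le> rr N0"
    using sK[of K] by auto
  obtain K3 where K3: "\<And>n. n \<ge> K3 \<Longrightarrow> rr N0 < norm (Q n)" using ev[of "rr N0"] rr_bounds by auto
  define j where "j = max K K3"
  obtain Nj cj vj where sj: "Q j = cj *\<^sub>R w Nj + vj" "vj \<in> span (w ` {..<Nj})" "norm (Q j) \<le> rr Nj" "1/4 \<le> \<bar>cj\<bar>"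
    using sK[of j] unfolding j_def by auto
  have "rr N0 < rr Nj" using K3[of j] sj(3) unfolding j_def by simp
  then have N0j: "N0 < Nj" by (rule rr_less)
  have "w N0 \<in> span (w ` {..<Nj})" using N0j by (intro span_base) auto
  moreover have "v0 \<in> span (w ` {..<Nj})"
  proof -
    have "w ` {..<N0} \<subseteq> w ` {..<Nj}" using N0j by auto
    then show ?thesis using span_mono s0(2) by blast
  qed
  ultimately have "Q K \<in> span (w ` {..<Nj})" unfolding s0(1) by (intro span_add span_scale)
  then have u: "vj - Q K \<in> span (w ` {..<Nj})" using sj(2) by (intro span_diff)
  have "\<bar>cj\<bar> / 2 \<le> norm (cj *\<^sub>R w Nj + (vj - Q K))"
    by (rule norm_comb[OF _ subspace_span u]) (use wsep in blast)
  also have "cj *\<^sub>R w Nj + (vj - Q K) = Q j - Q K" using sj(1) by simp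
  finally have "1/8 \<le> norm (Q j - Q K)" using sj(4) by simp
  moreover have "dist (Q j) (Q K) < 1/8" using K1[of j K] unfolding j_def K_def by simp
  ultimately show False by (simp add: dist_norm)
qed

end



theorem corollary2p9:
  fixes M :: "'a set" and d :: "'a \<Rightarrow> 'a \<Rightarrow> real" and z :: 'a
  assumes "complete_pointed_mspace M d z"
    and "\<And>S :: 'b::banach set. finite S \<Longrightarrow> span S \<noteq> UNIV"
  shows "\<exists>(M' :: ('a + nat) set) d'.
           complete_pointed_mspace M' d' (Inl z) \<and>
           (NA M' d' (Inl z) :: ('a + nat \<Rightarrow> 'b) set) \<subset> Lip0 M' d' (Inl z) \<and>
           countable (M' - Inl ` M) \<and>
           Inl ` M \<subseteq> M' \<and> (\<forall>x\<in>M. \<forall>y\<in>M. d' (Inl x) (Inl y) = d x y)"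
proof -
  have ms: "Metric_space M d" and mc: "Metric_space.mcomplete M d" and zM: "z \<in> M"
    using assms(1) unfolding complete_pointed_mspace_def by auto
  have wn: "\<And>n. norm (ws n :: 'b) = 1"
    and wsep: "\<And>n v. v \<in> span (ws ` {..<n}) \<Longrightarrow> 1/2 \<le> norm (ws n - v :: 'b)"
    using ws_prop[OF assms(2)] by blast+
  have f1: "ff (ws :: nat \<Rightarrow> 'b) \<in> Lip0 (ext_set M) (dd d z) (Inl z)"
    by (rule ff_Lip0[OF ms zM wn wsep])
  have f2: "ff (ws :: nat \<Rightarrow> 'b) \<notin> NA (ext_set M) (dd d z) (Inl z)"
    by (rule ff_not_NA[OF ms zM wn wsep])
  show ?thesis
  proof (intro exI conjI)
    show "complete_pointed_mspace (ext_set M) (dd d z) (Inl z)"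
      unfolding complete_pointed_mspace_def
      using dd_metric[OF ms zM] dd_complete[OF ms zM mc] zM by auto
    show "(NA (ext_set M) (dd d z) (Inl z) :: ('a + nat \<Rightarrow> 'b) set) \<subset> Lip0 (ext_set M) (dd d z) (Inl z)"
      using f1 f2 unfolding NA_def by blast
    have "ext_set M - Inl ` M \<subseteq> range Inr" by auto
    then show "countable (ext_set M - Inl ` M)" by (rule countable_subset) simp
    show "Inl ` M \<subseteq> ext_set M" by auto
    show "\<forall>x\<in>M. \<forall>y\<in>M. dd d z (Inl x) (Inl y) = d x y" by simp
  qed
qed

end
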